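(* Let $p_1,p_2\in(0,1)$ and let $\{X^1_k\}_{k\ge1}$, $\{X^2_k\}_{k\ge1}$ be two independent sequences of i.i.d. Bernoulli random variables with success parameters $p_1$ and $p_2$ respectively. Set $S^j(n)=\sum_{i=1}^n X^j_i$ for $j=1,2$ and $J^2=\inf\{n\ge1: S^1(n)=S^2(n)\}$ (with $\inf\emptyset=\infty$). Then $P(J^2=\infty)=|p_1-p_2|$, and for all $p_1,p_2\in(0,1)$ we have $E(J^2)=\infty$.
   Context: All random variables $X^j_k$ ($j=1,2$, $k\ge1$) are mutually independent, and $P(X^j_k=1)=p_j=1-P(X^j_k=0)$. *)

theory Defs
  imports "HOL-Probability.Probability"
begin

definition partial_sum :: "(nat \<Rightarrow> nat \<Rightarrow> 'a \<Rightarrow> real) \<Rightarrow> nat \<Rightarrow> nat \<Rightarrow> 'a \<Rightarrow> real" where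
  "partial_sum X j n \<omega> = (\<Sum>i=1..n. X j i \<omega>)"

definition first_meet :: "(nat \<Rightarrow> nat \<Rightarrow> 'a \<Rightarrow> real) \<Rightarrow> 'a \<Rightarrow> enat" where
  "first_meet X \<omega> =
     (if \<exists>n\<ge>1. partial_sum X 1 n \<omega> = partial_sum X 2 n \<omega>
      then enat (LEAST n. n \<ge> 1 \<and> partial_sum X 1 n \<omega> = partial_sum X 2 n \<omega>)
      else \<infinity>)"

end

theory Submission
  imports Defs
begin


fun hh :: "real \<Rightarrow> real \<Rightarrow> nat \<Rightarrow> int \<Rightarrow> real" where
  "hh a b 0 x = 1"
| "hh a b (Suc n) x = a * (if x + 1 \<noteq> 0 then hh a b n (x + 1) else 0)
     + b * (if x - 1 \<noteq> 0 then hh a b n (x - 1) else 0)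
     + (1 - a - b) * (if x \<noteq> 0 then hh a b n x else 0)"

lemma hh_bounds:
  assumes "0 \<le> a" "0 \<le> b" "a + b \<le> 1"
  shows "0 \<le> hh a b n x \<and> hh a b n x \<le> 1"
  using assms
proof (induction n arbitrary: x)
  case 0 then show ?case by simp
next
  case (Suc n)
  have h1: "0 \<le> (if x + 1 \<noteq> 0 then hh a b n (x + 1) else 0) \<and> (if x + 1 \<noteq> 0 then hh a b n (x + 1) else 0) \<le> 1"
    using Suc by auto
  have h2: "0 \<le> (if x - 1 \<noteq> 0 then hh a b n (x - 1) else 0) \<and> (if x - 1 \<noteq> 0 then hh a b n (x - 1) else 0) \<le> 1"
    using Suc by auto
  have h3: "0 \<le> (if x \<noteq> 0 then hh a b n x else 0) \<and> (if x \<noteq> 0 then hh a b n x else 0) \<le> 1"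
    using Suc by auto
  define u where "u = (if x + 1 \<noteq> 0 then hh a b n (x + 1) else 0)"
  define v where "v = (if x - 1 \<noteq> 0 then hh a b n (x - 1) else 0)"
  define w where "w = (if x \<noteq> 0 then hh a b n x else 0)"
  have "hh a b (Suc n) x = a * u + b * v + (1 - a - b) * w" by (simp add: u_def v_def w_def)
  moreover have "0 \<le> a * u + b * v + (1 - a - b) * w"
    using h1 h2 h3 Suc.prems unfolding u_def[symmetric] v_def[symmetric] w_def[symmetric]
    by (intro add_nonneg_nonneg mult_nonneg_nonneg) auto
  moreover have "a * u + b * v + (1 - a - b) * w \<le> a * 1 + b * 1 + (1 - a - b) * 1"
    using h1 h2 h3 Suc.prems unfolding u_def[symmetric] v_def[symmetric] w_def[symmetric]
    by (intro add_mono mult_left_mono) auto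
  ultimately show ?case by simp
qed

lemma hh_sym: "hh a b n x = hh b a n (-x)"
proof (induction n arbitrary: x)
  case 0 then show ?case by simp
next
  case (Suc n)
  have e1: "-x + 1 = -(x - 1)" "-x - 1 = -(x+1)" by auto
  show ?case
    by (simp only: hh.simps e1 Suc[symmetric]) (auto simp: algebra_simps)
qed

lemma hh_dec:
  assumes "0 \<le> a" "0 \<le> b" "a + b \<le> 1"
  shows "hh a b (Suc n) x \<le> hh a b n x"
proof (induction n arbitrary: x)
  case 0
  have "hh a b 1 x \<le> 1" using hh_bounds[OF assms] by blast
  then show ?case by simp
next
  case (Suc n)
  have "hh a b (Suc (Suc n)) x = a * (if x + 1 \<noteq> 0 then hh a b (Suc n) (x + 1) else 0)
     + b * (if x - 1 \<noteq> 0 then hh a b (Suc n) (x - 1) else 0)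
     + (1 - a - b) * (if x \<noteq> 0 then hh a b (Suc n) x else 0)" by simp
  also have "\<dots> \<le> a * (if x + 1 \<noteq> 0 then hh a b n (x + 1) else 0)
     + b * (if x - 1 \<noteq> 0 then hh a b n (x - 1) else 0)
     + (1 - a - b) * (if x \<noteq> 0 then hh a b n x else 0)"
    using Suc.IH assms by (intro add_mono mult_left_mono) (auto simp del: hh.simps)
  also have "\<dots> = hh a b (Suc n) x" by simp
  finally show ?case .
qed

lemma hh_lower:
  assumes "0 < a" "0 \<le> b" "a + b \<le> 1"
  shows "x \<ge> 1 \<Longrightarrow> hh a b n x \<ge> 1 - (b/a) ^ nat x"
proof (induction n arbitrary: x)
  case 0
  then show ?case using assms by simp
next
  case (Suc n)
  define r where "r = b / a"
  have br: "b = r * a" using assms by (simp add: r_def)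
  have A: "hh a b n (x+1) \<ge> 1 - r ^ Suc (nat x)"
    using Suc.IH[of "x+1"] Suc.prems by (simp add: r_def nat_add_distrib)
  have C: "hh a b n x \<ge> 1 - r ^ nat x" using Suc by (simp add: r_def)
  have c0: "0 \<le> 1 - a - b" using assms by simp
  show ?case
  proof (cases "x = 1")
    case True
    have "hh a b (Suc n) x = a * hh a b n (x+1) + (1-a-b) * hh a b n x" using True by simp
    also have "\<dots> \<ge> a * (1 - r ^ Suc (nat x)) + (1-a-b) * (1 - r ^ nat x)"
      using A C assms c0 by (intro add_mono mult_left_mono) auto
    finally have "hh a b (Suc n) x \<ge> a * (1 - r^2) + (1-a-b) * (1 - r)" using True by (simp add: numeral_2_eq_2)
    moreover have "a * (1 - r^2) + (1-a-b) * (1 - r) = 1 - r"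
      unfolding br by (simp add: algebra_simps power2_eq_square)
    ultimately show ?thesis using True by (simp add: r_def)
  next
    case False
    then have x2: "x \<ge> 2" using Suc.prems by simp
    have B: "hh a b n (x-1) \<ge> 1 - r ^ (nat x - 1)"
      using Suc.IH[of "x-1"] x2 by (simp add: r_def nat_diff_distrib)
    have "hh a b (Suc n) x = a * hh a b n (x+1) + b * hh a b n (x-1) + (1-a-b) * hh a b n x" using x2 by simp
    also have "\<dots> \<ge> a * (1 - r ^ Suc (nat x)) + b * (1 - r ^ (nat x - 1)) + (1-a-b) * (1 - r ^ nat x)"
      using A B C assms c0 by (intro add_mono mult_left_mono) auto
    finally have le: "hh a b (Suc n) x \<ge> a * (1 - r ^ Suc (nat x)) + b * (1 - r ^ (nat x - 1)) + (1-a-b) * (1 - r ^ nat x)" .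
    obtain k where k: "nat x = Suc k" using x2 by (cases "nat x") auto
    have "a * (1 - r ^ Suc (nat x)) + b * (1 - r ^ (nat x - 1)) + (1-a-b) * (1 - r ^ nat x) = 1 - r ^ nat x"
      unfolding k br by (simp add: algebra_simps)
    then show ?thesis using le by (simp add: r_def)
  qed
qed

lemma hh_conv:
  assumes "0 \<le> a" "0 \<le> b" "a + b \<le> 1"
  shows "(\<lambda>n. hh a b n x) \<longlonglongrightarrow> lim (\<lambda>n. hh a b n x)"
proof -
  have "decseq (\<lambda>n. hh a b n x)"
    using hh_dec[OF assms] by (intro decseq_SucI) auto
  moreover have "\<forall>i. 0 \<le> hh a b i x" using hh_bounds[OF assms] by blast
  ultimately obtain L where "(\<lambda>n. hh a b n x) \<longlonglongrightarrow> L" by (rule decseq_convergent)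
  then show ?thesis by (simp add: limI)
qed

lemma hh_lim_upper1:
  assumes a: "0 < a" and b: "0 < b" and ab: "a + b \<le> 1"
  shows "\<exists>L. (\<lambda>n. hh a b n 1) \<longlonglongrightarrow> L \<and> L \<le> max 0 (1 - b / a)"
proof -
  define H where "H x = lim (\<lambda>n. hh a b n x)" for x
  have conv: "(\<lambda>n. hh a b n x) \<longlonglongrightarrow> H x" for x
    unfolding H_def using hh_conv[of a b x] a b ab by simp
  have H01: "0 \<le> H x \<and> H x \<le> 1" for x
  proof -
    have "\<forall>n. 0 \<le> hh a b n x \<and> hh a b n x \<le> 1" using hh_bounds[of a b] a b ab by simp
    then show ?thesis using LIMSEQ_le_const[OF conv[of x]] LIMSEQ_le_const2[OF conv[of x]] by blast
  qed
  have rec: "H x = a * H (x+1) + b * (if x \<noteq> 1 then H (x - 1) else 0) + (1 - a - b) * H x"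
    if "x \<ge> 1" for x
  proof -
    have "(\<lambda>n. hh a b (Suc n) x) \<longlonglongrightarrow> H x" using conv[of x] by (rule LIMSEQ_Suc)
    moreover have "(\<lambda>n. hh a b (Suc n) x) = (\<lambda>n. a * hh a b n (x+1) + b * (if x \<noteq> 1 then hh a b n (x - 1) else 0) + (1 - a - b) * hh a b n x)"
      using that by auto
    moreover have "(\<lambda>n. a * hh a b n (x+1) + b * (if x \<noteq> 1 then hh a b n (x - 1) else 0) + (1 - a - b) * hh a b n x)
       \<longlonglongrightarrow> a * H (x+1) + b * (if x \<noteq> 1 then H (x - 1) else 0) + (1 - a - b) * H x"
      by (intro tendsto_intros conv) (cases "x = 1"; simp add: conv)
    ultimately show ?thesis using LIMSEQ_unique by metis
  qed
  define u where "u k = (if k = 0 then 0 else H (int k))" for k :: nat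
  define r where "r = b / a"
  have br: "b = r * a" using a by (simp add: r_def)
  have r0: "r > 0" using a b by (simp add: r_def)
  have urec: "a * u (Suc (Suc k)) + b * u k = (a + b) * u (Suc k)" for k
  proof -
    have r1: "H (int (Suc k)) = a * H (int (Suc k) + 1) + b * (if int (Suc k) \<noteq> 1 then H (int (Suc k) - 1) else 0) + (1 - a - b) * H (int (Suc k))"
      by (rule rec) simp
    have e: "int (Suc k) + 1 = int (Suc (Suc k))" "int (Suc k) - 1 = int k" "(int (Suc k) \<noteq> 1) = (k \<noteq> 0)" by auto
    from r1 have "H (int (Suc k)) = a * H (int (Suc (Suc k))) + b * (if k \<noteq> 0 then H (int k) else 0) + (1 - a - b) * H (int (Suc k))"
      unfolding e .
    then show ?thesis unfolding u_def by (cases k) (simp_all add: algebra_simps)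
  qed
  have udiff: "u (Suc k) - u k = r ^ k * u 1" for k
  proof (induction k)
    case 0 then show ?case by (simp add: u_def)
  next
    case (Suc k)
    have "a * (u (Suc (Suc k)) - u (Suc k)) = b * (u (Suc k) - u k)"
      using urec[of k] by (simp add: algebra_simps)
    then have "a * (u (Suc (Suc k)) - u (Suc k)) = a * (r * (u (Suc k) - u k))"
      unfolding br by (simp add: algebra_simps)
    then have "u (Suc (Suc k)) - u (Suc k) = r * (u (Suc k) - u k)"
      using a by simp
    then show ?case using Suc by simp
  qed
  have usum: "u k = u 1 * (\<Sum>i<k. r ^ i)" for k
  proof (induction k)
    case 0 then show ?case by (simp add: u_def)
  next
    case (Suc k)
    then show ?case using udiff[of k] by (simp add: algebra_simps)
  qed
  have u1: "0 \<le> u 1" using H01 by (simp add: u_def)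
  have ule: "u k \<le> 1" for k using H01 by (simp add: u_def)
  have "u 1 \<le> max 0 (1 - r)"
  proof (cases "r < 1")
    case True
    have "u 1 * (1 - r ^ k) \<le> 1 - r" for k
    proof -
      have "u 1 * ((1 - r ^ k) / (1 - r)) \<le> 1" using ule[of k] usum[of k] True by (simp add: sum_gp_strict)
      then show ?thesis using True by (simp add: field_simps)
    qed
    moreover have "(\<lambda>k. u 1 * (1 - r ^ k)) \<longlonglongrightarrow> u 1 * (1 - 0)"
      using LIMSEQ_realpow_zero[of r] True r0 by (intro tendsto_intros) auto
    ultimately have "u 1 \<le> 1 - r" using LIMSEQ_le_const2 by fastforce
    then show ?thesis by simp
  next
    case False
    have "u 1 * real k \<le> 1" for k
    proof -
      have "real k \<le> (\<Sum>i<k. r ^ i)"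
      proof -
        have "(\<Sum>i<k. (1::real)) \<le> (\<Sum>i<k. r ^ i)" using False by (intro sum_mono) (simp add: one_le_power)
        then show ?thesis by simp
      qed
      then have "u 1 * real k \<le> u 1 * (\<Sum>i<k. r ^ i)" using u1 by (rule mult_left_mono)
      then show ?thesis using ule[of k] usum[of k] by simp
    qed
    moreover have "u 1 \<le> 0"
    proof (rule ccontr)
      assume "\<not> u 1 \<le> 0"
      then have pos: "u 1 > 0" by simp
      obtain k :: nat where "real k > 1 / u 1" using reals_Archimedean2 by blast
      then have "u 1 * real k > 1" using pos by (simp add: field_simps)
      then show False using calculation[of k] by simp
    qed
    then show ?thesis by simp
  qed
  then show ?thesis using conv[of 1] by (auto simp: u_def r_def)
qed

lemma hh_ge_abs:
  assumes a: "0 < a" and b: "0 < b" and ab: "a + b \<le> 1"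
  shows "hh a b n 0 \<ge> \<bar>a - b\<bar>"
proof (cases n)
  case 0 then show ?thesis using a b ab by simp
next
  case (Suc m)
  have l1: "hh a b m 1 \<ge> max 0 (1 - b / a)"
    using hh_lower[of a b 1 m] hh_bounds[of a b m 1] a b ab by simp
  have l2: "hh a b m (-1) \<ge> max 0 (1 - a / b)"
    using hh_lower[of b a 1 m] hh_bounds[of b a m 1] hh_sym[of a b m "-1"] a b ab by simp
  have "hh a b n 0 = a * hh a b m 1 + b * hh a b m (-1)" using Suc by simp
  also have "\<dots> \<ge> a * max 0 (1 - b / a) + b * max 0 (1 - a / b)"
    using l1 l2 a b by (intro add_mono mult_left_mono) auto
  finally have "hh a b n 0 \<ge> a * max 0 (1 - b / a) + b * max 0 (1 - a / b)" .
  moreover have "a * max 0 (1 - b / a) + b * max 0 (1 - a / b) = \<bar>a - b\<bar>"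
    using a b by (cases "a \<le> b") (auto simp: field_simps max_def)
  ultimately show ?thesis by simp
qed

lemma hh_lim0:
  assumes a: "0 < a" and b: "0 < b" and ab: "a + b \<le> 1"
  shows "(\<lambda>n. hh a b n 0) \<longlonglongrightarrow> \<bar>a - b\<bar>"
proof -
  obtain L1 where L1: "(\<lambda>n. hh a b n 1) \<longlonglongrightarrow> L1" "L1 \<le> max 0 (1 - b / a)"
    using hh_lim_upper1[OF a b ab] by blast
  obtain L2 where L2: "(\<lambda>n. hh b a n 1) \<longlonglongrightarrow> L2" "L2 \<le> max 0 (1 - a / b)"
    using hh_lim_upper1[OF b a] ab by (auto simp: add.commute)
  have "(\<lambda>n. hh a b (Suc n) 0) = (\<lambda>n. a * hh a b n 1 + b * hh b a n 1)"
    using hh_sym[of a b _ "-1"] by auto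
  moreover have "(\<lambda>n. a * hh a b n 1 + b * hh b a n 1) \<longlonglongrightarrow> a * L1 + b * L2"
    by (intro tendsto_intros L1 L2)
  ultimately have conv: "(\<lambda>n. hh a b (Suc n) 0) \<longlonglongrightarrow> a * L1 + b * L2" by simp
  have "a * L1 + b * L2 \<le> a * max 0 (1 - b / a) + b * max 0 (1 - a / b)"
    using L1 L2 a b by (intro add_mono mult_left_mono) auto
  also have "a * max 0 (1 - b / a) + b * max 0 (1 - a / b) = \<bar>a - b\<bar>"
    using a b by (cases "a \<le> b") (auto simp: field_simps max_def)
  finally have up: "a * L1 + b * L2 \<le> \<bar>a - b\<bar>" .
  have lo: "a * L1 + b * L2 \<ge> \<bar>a - b\<bar>"
    using LIMSEQ_le_const[OF conv] hh_ge_abs[OF a b ab] by blast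
  have "(\<lambda>n. hh a b (Suc n) 0) \<longlonglongrightarrow> \<bar>a - b\<bar>" using conv up lo by simp
  then show ?thesis by (rule LIMSEQ_imp_Suc)
qed

lemma hh_sym_lower:
  assumes a: "0 < a" and ab: "2 * a \<le> 1"
  shows "x \<ge> 1 \<Longrightarrow> hh a a n x \<ge> min 1 (real_of_int x / real (Suc n))"
proof (induction n arbitrary: x)
  case 0 then show ?case by simp
next
  case (Suc n)
  define g where "g y = min 1 (real_of_int y / real (Suc n))" for y
  have A: "hh a a n (x+1) \<ge> g (x+1)" using Suc.IH[of "x+1"] Suc.prems by (simp add: g_def)
  have C: "hh a a n x \<ge> g x" using Suc by (simp add: g_def)
  have B: "(if x - 1 \<noteq> 0 then hh a a n (x - 1) else 0) \<ge> g (x - 1)"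
    using Suc.IH[of "x-1"] Suc.prems by (auto simp: g_def)
  have c0: "0 \<le> 1 - a - a" using ab by simp
  have "hh a a (Suc n) x = a * hh a a n (x+1) + a * (if x - 1 \<noteq> 0 then hh a a n (x - 1) else 0) + (1 - a - a) * hh a a n x"
    using Suc.prems by simp
  also have "\<dots> \<ge> a * g (x+1) + a * g (x - 1) + (1 - a - a) * g x"
    using A B C a c0 by (intro add_mono mult_left_mono) auto
  finally have le: "hh a a (Suc n) x \<ge> a * g (x+1) + a * g (x - 1) + (1 - a - a) * g x" .
  have "a * g (x+1) + a * g (x - 1) + (1 - a - a) * g x \<ge> min 1 (real_of_int x / real (Suc (Suc n)))"
  proof -
    consider "x \<le> int n" | "x = int n + 1" | "x \<ge> int n + 2" by linarith
    then show ?thesis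
    proof cases
      case 1
      have q1: "real_of_int (x+1) / real (Suc n) \<le> 1" "real_of_int (x-1) / real (Suc n) \<le> 1"
         "real_of_int x / real (Suc n) \<le> 1"
        using 1 by (simp_all add: divide_le_eq_1)
      then have "g (x+1) = (x+1) / (n+1)" "g (x-1) = (x-1)/(n+1)" "g x = x / (n+1)"
        unfolding g_def by (simp_all add: min_def add.commute)
      moreover have "real_of_int x / (n+1) \<ge> real_of_int x / (n+2)"
        using Suc.prems by (intro divide_left_mono) auto
      moreover have "a * ((x+1) / (n+1)) + a * ((x-1)/(n+1)) + (1 - a - a) * (x / (n+1)) = x / (n+1)"
      proof -
        have "a * ((x+1) / (n+1)) + a * ((x-1)/(n+1)) + (1 - a - a) * (x / (n+1)) = (a * (x+1) + a * (x-1) + (1-a-a) * x) / (n+1)"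
          by (simp only: times_divide_eq_right add_divide_distrib[symmetric] diff_divide_distrib[symmetric])
        also have "a * (x+1) + a * (x-1) + (1-a-a) * x = x" by (simp add: algebra_simps)
        finally show ?thesis .
      qed
      ultimately show ?thesis by (simp add: min_le_iff_disj add.commute)
    next
      case 2
      then have "g (x+1) = 1" "g (x-1) = n/(n+1)" "g x = 1"
        by (auto simp: g_def min_def field_simps)
      moreover have "a * 1 + a * (n/(n+1)) + (1 - a - a) * 1 \<ge> x / (n+2)"
      proof -
        have "a * 1 + a * (n/(n+1)) + (1 - a - a) * 1 = 1 - a / (n+1)" by (simp add: field_simps)
        moreover have "a / (n+1) \<le> 1 / (n+2)"
        proof -
          have an: "a * real n \<le> 1/2 * real n" using mult_right_mono[of a "1/2" "real n"] ab by simp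
          then show ?thesis using ab a by (simp add: field_simps)
        qed
        moreover have "real_of_int x / (n+2) = 1 - 1/(n+2)" using 2 by (simp add: field_simps)
        ultimately show ?thesis by linarith
      qed
      ultimately show ?thesis by simp
    next
      case 3
      then have "g (x+1) = 1" "g (x-1) = 1" "g x = 1"
        by (auto simp: g_def min_def field_simps)
      then show ?thesis by simp
    qed
  qed
  then show ?case using le by linarith
qed


definition stp :: "(nat \<Rightarrow> nat \<Rightarrow> 'a \<Rightarrow> real) \<Rightarrow> nat \<Rightarrow> 'a \<Rightarrow> real" where
  "stp X i \<omega> = X 1 i \<omega> - X 2 i \<omega>"

definition avoid :: "'a measure \<Rightarrow> (nat \<Rightarrow> nat \<Rightarrow> 'a \<Rightarrow> real) \<Rightarrow> nat \<Rightarrow> nat \<Rightarrow> int \<Rightarrow> 'a set" where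
  "avoid M X m n x = {\<omega> \<in> space M. \<forall>k\<in>{1..n}. real_of_int x + (\<Sum>i\<in>{Suc m..m+k}. stp X i \<omega>) \<noteq> 0}"

lemma avoid_sets:
  assumes meas: "\<And>j k. j \<in> {1,2} \<Longrightarrow> k \<ge> 1 \<Longrightarrow> X j k \<in> borel_measurable M"
  shows "avoid M X m n x \<in> sets M"
proof -
  have sm: "(\<lambda>\<omega>. real_of_int x + (\<Sum>i\<in>{Suc m..m+k}. stp X i \<omega>)) \<in> borel_measurable M" for k
    unfolding stp_def using meas by (intro borel_measurable_add borel_measurable_const borel_measurable_sum borel_measurable_diff) auto
  have "{\<omega> \<in> space M. real_of_int x + (\<Sum>i\<in>{Suc m..m+k}. stp X i \<omega>) \<noteq> 0} \<in> sets M" for k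
  proof -
    have "{\<omega> \<in> space M. real_of_int x + (\<Sum>i\<in>{Suc m..m+k}. stp X i \<omega>) \<noteq> 0}
       = space M - ((\<lambda>\<omega>. real_of_int x + (\<Sum>i\<in>{Suc m..m+k}. stp X i \<omega>)) -` {0} \<inter> space M)" by auto
    also have "\<dots> \<in> sets M" using measurable_sets[OF sm[of k], of "{0}"] by auto
    finally show ?thesis .
  qed
  then show ?thesis unfolding avoid_def by (intro sets.sets_Collect_finite_All) auto
qed

lemma avoid_Suc_iff:
  "\<omega> \<in> avoid M X m (Suc n) x \<longleftrightarrow> \<omega> \<in> space M \<and> real_of_int x + stp X (Suc m) \<omega> \<noteq> 0 \<and>
     (\<forall>k\<in>{1..n}. (real_of_int x + stp X (Suc m) \<omega>) + (\<Sum>i\<in>{Suc (Suc m)..Suc m+k}. stp X i \<omega>) \<noteq> 0)"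
proof -
  have split: "(\<Sum>i\<in>{Suc m..m + Suc k}. stp X i \<omega>) = stp X (Suc m) \<omega> + (\<Sum>i\<in>{Suc (Suc m)..Suc m+k}. stp X i \<omega>)" for k
    by (subst sum.atLeast_Suc_atMost) auto
  have "(\<forall>k\<in>{1..Suc n}. P k) \<longleftrightarrow> P 1 \<and> (\<forall>k\<in>{1..n}. P (Suc k))" for P :: "nat \<Rightarrow> bool"
  proof
    assume "\<forall>k\<in>{1..Suc n}. P k" then show "P 1 \<and> (\<forall>k\<in>{1..n}. P (Suc k))" by auto
  next
    assume h: "P 1 \<and> (\<forall>k\<in>{1..n}. P (Suc k))"
    show "\<forall>k\<in>{1..Suc n}. P k"
    proof
      fix k assume "k \<in> {1..Suc n}"
      show "P k"
      proof (cases "k = 1")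
        case True then show ?thesis using h by simp
      next
        case False
        then have "k = Suc (k - 1)" "k - 1 \<in> {1..n}" using \<open>k \<in> {1..Suc n}\<close> by auto
        then show ?thesis using h by metis
      qed
    qed
  qed
  note q = this
  define Q where "Q k \<longleftrightarrow> real_of_int x + (\<Sum>i\<in>{Suc m..m+k}. stp X i \<omega>) \<noteq> 0" for k
  have Q1: "Q 1 \<longleftrightarrow> real_of_int x + stp X (Suc m) \<omega> \<noteq> 0" by (simp add: Q_def)
  have QS: "Q (Suc k) \<longleftrightarrow> (real_of_int x + stp X (Suc m) \<omega>) + (\<Sum>i\<in>{Suc (Suc m)..Suc m+k}. stp X i \<omega>) \<noteq> 0" for k
    unfolding Q_def split by (simp add: add.assoc)
  have "\<omega> \<in> avoid M X m (Suc n) x \<longleftrightarrow> \<omega> \<in> space M \<and> (\<forall>k\<in>{1..Suc n}. Q k)"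
    by (simp add: avoid_def Q_def)
  also have "\<dots> \<longleftrightarrow> \<omega> \<in> space M \<and> Q 1 \<and> (\<forall>k\<in>{1..n}. Q (Suc k))" using q[of Q] by simp
  finally show ?thesis unfolding Q1 QS .
qed

context prob_space
begin

lemma avoid_step_indep:
  assumes indep: "indep_vars (\<lambda>_. borel) (\<lambda>(j, k). X j k) ({1, 2} \<times> {1..})"
  shows "prob ({\<omega> \<in> space M. stp X (Suc m) \<omega> = s} \<inter> avoid M X (Suc m) n y)
       = prob {\<omega> \<in> space M. stp X (Suc m) \<omega> = s} * prob (avoid M X (Suc m) n y)"
proof -
  define Y where "Y = (\<lambda>(j, k). X j k)"
  define K where "K = {1::nat,2} \<times> {Suc m}"
  define L where "L = {1::nat,2} \<times> {Suc (Suc m)..Suc m + n}"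
  define fK where "fK \<omega> = restrict (\<lambda>i. Y i \<omega>) K" for \<omega>
  define fL where "fL \<omega> = restrict (\<lambda>i. Y i \<omega>) L" for \<omega>
  have iv: "indep_var (PiM K (\<lambda>_. borel)) fK (PiM L (\<lambda>_. borel)) fL"
    unfolding fK_def fL_def
    by (rule indep_var_restrict[OF indep[folded Y_def]]) (auto simp: K_def L_def)
  define SK where "SK = {\<phi> \<in> space (PiM K (\<lambda>_. borel :: real measure)). \<phi> (1, Suc m) - \<phi> (2, Suc m) = s}"
  define gL where "gL k \<phi> = real_of_int y + (\<Sum>i\<in>{Suc (Suc m)..Suc m + k}. \<phi> (1, i) - \<phi> (2, i))" for k and \<phi> :: "nat \<times> nat \<Rightarrow> real"
  define SL where "SL = {\<phi> \<in> space (PiM L (\<lambda>_. borel :: real measure)). \<forall>k\<in>{1..n}. gL k \<phi> \<noteq> 0}"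
  have SK: "SK \<in> sets (PiM K (\<lambda>_. borel))"
  proof -
    have m: "(\<lambda>\<phi>. \<phi> (1, Suc m) - \<phi> (2, Suc m)) \<in> borel_measurable (PiM K (\<lambda>_. borel :: real measure))"
      by (intro borel_measurable_diff measurable_component_singleton) (auto simp: K_def)
    have "SK = (\<lambda>\<phi>. \<phi> (1, Suc m) - \<phi> (2, Suc m)) -` {s} \<inter> space (PiM K (\<lambda>_. borel))"
      unfolding SK_def by auto
    then show ?thesis using measurable_sets[OF m, of "{s}"] by simp
  qed
  have SL: "SL \<in> sets (PiM L (\<lambda>_. borel))"
  proof -
    have m: "gL k \<in> borel_measurable (PiM L (\<lambda>_. borel :: real measure))" if "k \<in> {1..n}" for k
      unfolding gL_def using that
      by (intro borel_measurable_add borel_measurable_const borel_measurable_sum borel_measurable_diff measurable_component_singleton)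
        (auto simp: L_def)
    have "{\<phi> \<in> space (PiM L (\<lambda>_. borel :: real measure)). gL k \<phi> \<noteq> 0} \<in> sets (PiM L (\<lambda>_. borel))" if "k \<in> {1..n}" for k
    proof -
      have "{\<phi> \<in> space (PiM L (\<lambda>_. borel :: real measure)). gL k \<phi> \<noteq> 0} = space (PiM L (\<lambda>_. borel)) - (gL k -` {0} \<inter> space (PiM L (\<lambda>_. borel)))"
        by auto
      also have "\<dots> \<in> sets (PiM L (\<lambda>_. borel))" using measurable_sets[OF m[OF that], of "{0}"] by auto
      finally show ?thesis .
    qed
    then show ?thesis unfolding SL_def by (intro sets.sets_Collect_finite_All) auto
  qed
  have eK: "fK -` SK \<inter> space M = {\<omega> \<in> space M. stp X (Suc m) \<omega> = s}"
    unfolding fK_def SK_def K_def Y_def stp_def by (auto simp: space_PiM)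
  have gLf: "gL k (fL \<omega>) = real_of_int y + (\<Sum>i\<in>{Suc (Suc m)..Suc m + k}. stp X i \<omega>)" if "k \<le> n" for k \<omega>
    unfolding gL_def fL_def stp_def using that by (auto simp: L_def Y_def intro!: sum.cong)
  have eL: "fL -` SL \<inter> space M = avoid M X (Suc m) n y"
    unfolding SL_def avoid_def using gLf by (auto simp: space_PiM fL_def)
  have ePair: "(\<lambda>x. (fK x, fL x)) -` (SK \<times> SL) \<inter> space M = {\<omega> \<in> space M. stp X (Suc m) \<omega> = s} \<inter> avoid M X (Suc m) n y"
    using eK eL by blast
  show ?thesis using indep_varD[OF iv SK SL] unfolding ePair eK eL .
qed

end


locale bwalk = prob_space M for M :: "'a measure" +
  fixes X :: "nat \<Rightarrow> nat \<Rightarrow> 'a \<Rightarrow> real" and p1 p2 :: real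
  assumes indep: "indep_vars (\<lambda>_. borel) (\<lambda>(j, k). X j k) ({1, 2} \<times> {1..})"
    and vals: "\<And>j k \<omega>. X j k \<omega> = 0 \<or> X j k \<omega> = 1"
    and P1: "\<And>k. k \<ge> 1 \<Longrightarrow> prob {\<omega> \<in> space M. X 1 k \<omega> = 1} = p1"
    and P2: "\<And>k. k \<ge> 1 \<Longrightarrow> prob {\<omega> \<in> space M. X 2 k \<omega> = 1} = p2"
begin

lemma meas: "j \<in> {1,2} \<Longrightarrow> k \<ge> 1 \<Longrightarrow> X j k \<in> borel_measurable M"
proof -
  assume jk: "j \<in> {1,2}" "k \<ge> 1"
  have "\<forall>i\<in>{1,2}\<times>{1..}. (\<lambda>(j, k). X j k) i \<in> borel_measurable M"
    using indep unfolding indep_vars_def by blast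
  then have "(\<lambda>(j, k). X j k) (j, k) \<in> borel_measurable M" using jk by blast
  then show ?thesis by simp
qed

lemma evX: "j \<in> {1,2} \<Longrightarrow> k \<ge> 1 \<Longrightarrow> {\<omega> \<in> space M. X j k \<omega> = e} \<in> events"
proof -
  assume jk: "j \<in> {1,2}" "k \<ge> 1"
  then have "X j k -` {e} \<inter> space M \<in> events" using measurable_sets[OF meas[OF jk], of "{e}"] by simp
  moreover have "X j k -` {e} \<inter> space M = {\<omega> \<in> space M. X j k \<omega> = e}" by auto
  ultimately show ?thesis by simp
qed

lemma P0:
  assumes "j \<in> {1,2}" "k \<ge> 1"
  shows "prob {\<omega> \<in> space M. X j k \<omega> = 0} = 1 - prob {\<omega> \<in> space M. X j k \<omega> = 1}"
proof -
  have "{\<omega> \<in> space M. X j k \<omega> = 0} = space M - {\<omega> \<in> space M. X j k \<omega> = 1}"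
  proof (intro set_eqI)
    fix \<omega> show "\<omega> \<in> {\<omega> \<in> space M. X j k \<omega> = 0} \<longleftrightarrow> \<omega> \<in> space M - {\<omega> \<in> space M. X j k \<omega> = 1}"
      using vals[of j k \<omega>] by auto
  qed
  then show ?thesis using prob_compl[OF evX[OF assms]] by simp
qed

lemma pair:
  assumes "k \<ge> 1"
  shows "prob ({\<omega> \<in> space M. X 1 k \<omega> = e1} \<inter> {\<omega> \<in> space M. X 2 k \<omega> = e2})
    = prob {\<omega> \<in> space M. X 1 k \<omega> = e1} * prob {\<omega> \<in> space M. X 2 k \<omega> = e2}"
proof -
  define A where "A = (\<lambda>(j::nat, _::nat). if j = 1 then {e1} else {e2 :: real})"
  have "prob (\<Inter>i\<in>{(1,k),(2,k)}. (\<lambda>(j, k). X j k) i -` A i \<inter> space M)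
     = (\<Prod>i\<in>{(1,k),(2,k)}. prob ((\<lambda>(j, k). X j k) i -` A i \<inter> space M))"
    using assms by (intro indep_varsD[OF indep]) (auto simp: A_def)
  moreover have "(\<lambda>(j, k). X j k) (1,k) -` A (1,k) \<inter> space M = {\<omega> \<in> space M. X 1 k \<omega> = e1}"
    "(\<lambda>(j, k). X j k) (2,k) -` A (2,k) \<inter> space M = {\<omega> \<in> space M. X 2 k \<omega> = e2}"
    by (auto simp: A_def)
  moreover have "(\<Inter>i\<in>{(1::nat,k),(2,k)}. (\<lambda>(j, k). X j k) i -` A i \<inter> space M)
     = ((\<lambda>(j, k). X j k) (1,k) -` A (1,k) \<inter> space M) \<inter> ((\<lambda>(j, k). X j k) (2,k) -` A (2,k) \<inter> space M)"
    by (simp only: INT_insert INT_empty) blast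
  moreover have "(\<Prod>i\<in>{(1::nat,k),(2,k)}. prob ((\<lambda>(j, k). X j k) i -` A i \<inter> space M))
     = prob ((\<lambda>(j, k). X j k) (1,k) -` A (1,k) \<inter> space M) * prob ((\<lambda>(j, k). X j k) (2,k) -` A (2,k) \<inter> space M)"
    by (subst prod.insert) auto
  ultimately show ?thesis by metis
qed

lemma stp_vals: "stp X k \<omega> = 1 \<or> stp X k \<omega> = -1 \<or> stp X k \<omega> = 0"
  using vals[of 1 k \<omega>] vals[of 2 k \<omega>] by (auto simp: stp_def)

lemma stp_meas: "k \<ge> 1 \<Longrightarrow> stp X k \<in> borel_measurable M"
  unfolding stp_def[abs_def] using meas by auto

lemma evstp: "k \<ge> 1 \<Longrightarrow> {\<omega> \<in> space M. stp X k \<omega> = s} \<in> events"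
proof -
  assume k: "k \<ge> 1"
  then have "stp X k -` {s} \<inter> space M \<in> events" using measurable_sets[OF stp_meas[OF k], of "{s}"] by simp
  moreover have "stp X k -` {s} \<inter> space M = {\<omega> \<in> space M. stp X k \<omega> = s}" by auto
  ultimately show ?thesis by simp
qed

lemma stp_probs:
  assumes k: "k \<ge> 1"
  shows "prob {\<omega> \<in> space M. stp X k \<omega> = 1} = p1 * (1 - p2)"
    "prob {\<omega> \<in> space M. stp X k \<omega> = -1} = (1 - p1) * p2"
    "prob {\<omega> \<in> space M. stp X k \<omega> = 0} = 1 - p1 * (1 - p2) - (1 - p1) * p2"
proof -
  have q1: "prob {\<omega> \<in> space M. X 1 k \<omega> = 0} = 1 - p1" using P0[of 1 k] P1[OF k] k by simp
  have q2: "prob {\<omega> \<in> space M. X 2 k \<omega> = 0} = 1 - p2" using P0[of 2 k] P2[OF k] k by simp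
  have e1: "{\<omega> \<in> space M. stp X k \<omega> = 1} = {\<omega> \<in> space M. X 1 k \<omega> = 1} \<inter> {\<omega> \<in> space M. X 2 k \<omega> = 0}"
  proof (intro set_eqI)
    fix \<omega> show "\<omega> \<in> {\<omega> \<in> space M. stp X k \<omega> = 1} \<longleftrightarrow> \<omega> \<in> {\<omega> \<in> space M. X 1 k \<omega> = 1} \<inter> {\<omega> \<in> space M. X 2 k \<omega> = 0}"
      using vals[of 1 k \<omega>] vals[of 2 k \<omega>] by (auto simp: stp_def)
  qed
  show s1: "prob {\<omega> \<in> space M. stp X k \<omega> = 1} = p1 * (1 - p2)"
    unfolding e1 pair[OF k] q2 P1[OF k] by simp
  have e2: "{\<omega> \<in> space M. stp X k \<omega> = -1} = {\<omega> \<in> space M. X 1 k \<omega> = 0} \<inter> {\<omega> \<in> space M. X 2 k \<omega> = 1}"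
  proof (intro set_eqI)
    fix \<omega> show "\<omega> \<in> {\<omega> \<in> space M. stp X k \<omega> = -1} \<longleftrightarrow> \<omega> \<in> {\<omega> \<in> space M. X 1 k \<omega> = 0} \<inter> {\<omega> \<in> space M. X 2 k \<omega> = 1}"
      using vals[of 1 k \<omega>] vals[of 2 k \<omega>] by (auto simp: stp_def)
  qed
  show s2: "prob {\<omega> \<in> space M. stp X k \<omega> = -1} = (1 - p1) * p2"
    unfolding e2 pair[OF k] q1 P2[OF k] by simp
  have sp: "space M = ({\<omega> \<in> space M. stp X k \<omega> = 1} \<union> {\<omega> \<in> space M. stp X k \<omega> = -1}) \<union> {\<omega> \<in> space M. stp X k \<omega> = 0}"
    using stp_vals by blast
  have "prob (space M) = prob {\<omega> \<in> space M. stp X k \<omega> = 1} + prob {\<omega> \<in> space M. stp X k \<omega> = -1} + prob {\<omega> \<in> space M. stp X k \<omega> = 0}"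
    apply (subst sp)
    apply (subst finite_measure_Union)
    using evstp[OF k] apply (auto)[3]
    apply (subst finite_measure_Union)
    using evstp[OF k] apply auto
    done
  then show "prob {\<omega> \<in> space M. stp X k \<omega> = 0} = 1 - p1 * (1 - p2) - (1 - p1) * p2"
    using s1 s2 prob_space by simp
qed

lemma avoid_ev: "avoid M X m n x \<in> events"
  by (rule avoid_sets) (use meas in auto)

lemma prob_avoid: "prob (avoid M X m n x) = hh (p1 * (1 - p2)) ((1 - p1) * p2) n x"
proof (induction n arbitrary: m x)
  case 0
  have "avoid M X m 0 x = space M" by (auto simp: avoid_def)
  then show ?case using prob_space by simp
next
  case (Suc n)
  define a where "a = p1 * (1 - p2)"
  define b where "b = (1 - p1) * p2"
  define E where "E s = {\<omega> \<in> space M. stp X (Suc m) \<omega> = s}" for s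
  define B where "B y = (if y \<noteq> 0 then avoid M X (Suc m) n y else {})" for y
  have Eev: "E s \<in> events" for s unfolding E_def by (rule evstp) simp
  have Bev: "B y \<in> events" for y unfolding B_def using avoid_ev by simp
  have EB: "E s \<inter> B y \<in> events" for s y using Eev Bev by blast
  have pEB: "prob (E s \<inter> B y) = prob (E s) * (if y \<noteq> 0 then hh a b n y else 0)" for s y
  proof (cases "y = 0")
    case True then show ?thesis by (simp add: B_def)
  next
    case False
    have "prob (E s \<inter> B y) = prob (E s) * prob (avoid M X (Suc m) n y)"
      unfolding E_def B_def using avoid_step_indep[OF indep, of m s n y] False by simp
    also have "prob (avoid M X (Suc m) n y) = hh a b n y" unfolding a_def b_def by (rule Suc.IH)
    finally show ?thesis using False by simp
  qed
  have seteq: "avoid M X m (Suc n) x = ((E 1 \<inter> B (x+1)) \<union> (E (-1) \<inter> B (x-1))) \<union> (E 0 \<inter> B x)"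
  proof (intro set_eqI)
    fix \<omega>
    show "\<omega> \<in> avoid M X m (Suc n) x \<longleftrightarrow> \<omega> \<in> ((E 1 \<inter> B (x+1)) \<union> (E (-1) \<inter> B (x-1))) \<union> (E 0 \<inter> B x)"
    proof -
      from stp_vals[of "Suc m" \<omega>] consider "stp X (Suc m) \<omega> = 1" | "stp X (Suc m) \<omega> = -1" | "stp X (Suc m) \<omega> = 0"
        by blast
      then show ?thesis
      proof cases
        case 1 then show ?thesis unfolding avoid_Suc_iff by (simp add: E_def B_def avoid_def)
      next
        case 2 then show ?thesis unfolding avoid_Suc_iff by (simp add: E_def B_def avoid_def)
      next
        case 3 then show ?thesis unfolding avoid_Suc_iff by (simp add: E_def B_def avoid_def)
      qed
    qed
  qed
  have d1: "(E 1 \<inter> B (x+1)) \<inter> (E (-1) \<inter> B (x-1)) = {}" unfolding E_def by auto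
  have d2: "((E 1 \<inter> B (x+1)) \<union> (E (-1) \<inter> B (x-1))) \<inter> (E 0 \<inter> B x) = {}" unfolding E_def by auto
  have U1: "prob (avoid M X m (Suc n) x) = prob ((E 1 \<inter> B (x+1)) \<union> (E (-1) \<inter> B (x-1))) + prob (E 0 \<inter> B x)"
    unfolding seteq by (rule finite_measure_Union) (use EB d2 in auto)
  have U2: "prob ((E 1 \<inter> B (x+1)) \<union> (E (-1) \<inter> B (x-1))) = prob (E 1 \<inter> B (x+1)) + prob (E (-1) \<inter> B (x-1))"
    by (rule finite_measure_Union) (use EB d1 in auto)
  have pr: "prob (E 1) = a" "prob (E (-1)) = b" "prob (E 0) = 1 - a - b"
    using stp_probs[of "Suc m"] unfolding E_def a_def b_def by auto
  have "prob (avoid M X m (Suc n) x) = prob (E 1 \<inter> B (x+1)) + prob (E (-1) \<inter> B (x-1)) + prob (E 0 \<inter> B x)"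
    using U1 U2 by simp
  also have "\<dots> = hh a b (Suc n) x"
    unfolding pEB pr by (simp only: hh.simps)
  finally show ?case by (simp add: a_def b_def)
qed

end



lemma hh_not_summable:
  assumes "0 < p1" "p1 < 1" "0 < p2" "p2 < 1"
  shows "\<not> summable (\<lambda>n. hh (p1 * (1 - p2)) ((1 - p1) * p2) n 0)"
proof
  define a where "a = p1 * (1 - p2)"
  define b where "b = (1 - p1) * p2"
  have a: "0 < a" and b: "0 < b" using assms by (simp_all add: a_def b_def)
  have ab: "a + b \<le> 1"
  proof -
    have "0 \<le> p1 * p2 + (1 - p1) * (1 - p2)" using assms by (intro add_nonneg_nonneg mult_nonneg_nonneg) auto
    then show ?thesis by (simp add: a_def b_def algebra_simps)
  qed
  assume sm: "summable (\<lambda>n. hh (p1 * (1 - p2)) ((1 - p1) * p2) n 0)"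
  then have sm': "summable (\<lambda>n. hh a b n 0)" by (simp add: a_def b_def)
  show False
  proof (cases "p1 = p2")
    case False
    have "\<bar>a - b\<bar> = \<bar>p1 - p2\<bar>" by (simp add: a_def b_def algebra_simps)
    then have pos: "\<bar>a - b\<bar> > 0" using False by simp
    have "(\<lambda>n. hh a b n 0) \<longlonglongrightarrow> 0" using sm' by (rule summable_LIMSEQ_zero)
    then have "\<bar>a - b\<bar> \<le> 0" using hh_ge_abs[OF a b ab] by (intro LIMSEQ_le_const) auto
    then show False using pos by simp
  next
    case True
    then have ba: "b = a" by (simp add: a_def b_def)
    have a2: "2 * a \<le> 1" using ab ba by simp
    have low: "a / real (Suc n) \<le> hh a a (Suc n) 0" for n
    proof -
      have h1: "hh a a n 1 \<ge> min 1 (1 / real (Suc n))" using hh_sym_lower[OF a a2, of 1 n] by simp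
      have "min 1 (1 / real (Suc n)) = 1 / real (Suc n)" by simp
      then have h1': "hh a a n 1 \<ge> 1 / real (Suc n)" using h1 by simp
      have h2: "hh a a n (-1) \<ge> 0" using hh_bounds[of a a n "-1"] a ab ba by simp
      have "hh a a (Suc n) 0 = a * hh a a n 1 + a * hh a a n (-1)" by simp
      also have "\<dots> \<ge> a * (1 / real (Suc n)) + a * 0"
        using h1' h2 a by (intro add_mono mult_left_mono) auto
      finally show ?thesis by simp
    qed
    have "summable (\<lambda>n. hh a a (Suc n) 0)" unfolding summable_Suc_iff[of "\<lambda>n. hh a a n 0"]
      using sm' ba by (simp del: hh.simps)
    then have "summable (\<lambda>n. a / real (Suc n))"
      by (rule summable_comparison_test') (use low a in auto)
    then have "summable (\<lambda>n. (1 / a) * (a / real (Suc n)))" by (rule summable_mult)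
    then have "summable (\<lambda>n. inverse (real (Suc n)))" using a by (simp add: inverse_eq_divide)
    then have "summable (\<lambda>n. inverse (real n))" using summable_Suc_iff[of "\<lambda>n. inverse (real n)"] by simp
    then show False using not_summable_harmonic[where 'a=real] by simp
  qed
qed

lemma psum_diff: "partial_sum X 1 k \<omega> - partial_sum X 2 k \<omega> = (\<Sum>i\<in>{1..k}. stp X i \<omega>)"
  by (simp add: partial_sum_def stp_def sum_subtractf)

lemma fm_inf: "{\<omega> \<in> space M. first_meet X \<omega> = \<infinity>} = (\<Inter>n. avoid M X 0 n 0)"
proof (intro set_eqI iffI)
  fix \<omega> assume "\<omega> \<in> {\<omega> \<in> space M. first_meet X \<omega> = \<infinity>}"
  then have sp: "\<omega> \<in> space M" and nm: "\<not> (\<exists>n\<ge>1. partial_sum X 1 n \<omega> = partial_sum X 2 n \<omega>)"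
    by (auto simp: first_meet_def split: if_splits)
  have "(\<Sum>i\<in>{1..k}. stp X i \<omega>) \<noteq> 0" if "k \<ge> 1" for k
    using nm that psum_diff[of X k \<omega>] by auto
  then show "\<omega> \<in> (\<Inter>n. avoid M X 0 n 0)" using sp by (auto simp: avoid_def)
next
  fix \<omega> assume h: "\<omega> \<in> (\<Inter>n. avoid M X 0 n 0)"
  then have sp: "\<omega> \<in> space M" by (auto simp: avoid_def)
  have "partial_sum X 1 k \<omega> \<noteq> partial_sum X 2 k \<omega>" if "k \<ge> 1" for k
  proof -
    have "\<omega> \<in> avoid M X 0 k 0" using h by blast
    then have "(\<Sum>i\<in>{1..k}. stp X i \<omega>) \<noteq> 0" using that by (auto simp: avoid_def)
    then show ?thesis using psum_diff[of X k \<omega>] by auto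
  qed
  then have "\<not> (\<exists>n\<ge>1. partial_sum X 1 n \<omega> = partial_sum X 2 n \<omega>)" by blast
  then show "\<omega> \<in> {\<omega> \<in> space M. first_meet X \<omega> = \<infinity>}" using sp unfolding first_meet_def by simp
qed

lemma fm_gt:
  assumes "\<omega> \<in> avoid M X 0 n 0"
  shows "enat n < first_meet X \<omega>"
proof (cases "\<exists>n\<ge>1. partial_sum X 1 n \<omega> = partial_sum X 2 n \<omega>")
  case False then show ?thesis unfolding first_meet_def if_not_P[OF False] by simp
next
  case True
  define L where "L = (LEAST n. n \<ge> 1 \<and> partial_sum X 1 n \<omega> = partial_sum X 2 n \<omega>)"
  have L: "L \<ge> 1 \<and> partial_sum X 1 L \<omega> = partial_sum X 2 L \<omega>"
    unfolding L_def using True by (rule LeastI_ex)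
  have "\<not> (L \<le> n)"
  proof
    assume "L \<le> n"
    then have "(\<Sum>i\<in>{1..L}. stp X i \<omega>) \<noteq> 0" using assms L by (auto simp: avoid_def)
    then show False using L psum_diff[of X L \<omega>] by simp
  qed
  then have "n < L" by simp
  moreover have "first_meet X \<omega> = enat L" unfolding first_meet_def if_P[OF True] L_def ..
  ultimately show ?thesis by simp
qed

lemma sum_ind_le: "(\<Sum>n<N. (if enat n < e then 1 else 0) :: ennreal) \<le> ennreal_of_enat e"
proof (cases e)
  case infinity then show ?thesis by simp
next
  case (enat j)
  have "(\<Sum>n<N. (if enat n < enat j then 1 else 0) :: ennreal) = of_nat (min N j)"
    by (induction N) (auto simp: min_def)
  also have "\<dots> \<le> of_nat j" by (intro of_nat_mono) simp
  finally show ?thesis using enat by simp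
qed



context bwalk
begin

lemma main:
  assumes p: "0 < p1" "p1 < 1" "0 < p2" "p2 < 1"
  shows "prob {\<omega> \<in> space M. first_meet X \<omega> = \<infinity>} = \<bar>p1 - p2\<bar>
         \<and> (\<integral>\<^sup>+ \<omega>. ennreal_of_enat (first_meet X \<omega>) \<partial>M) = \<infinity>"
proof
  define a where "a = p1 * (1 - p2)"
  define b where "b = (1 - p1) * p2"
  have a: "0 < a" and b: "0 < b" using p by (simp_all add: a_def b_def)
  have ab: "a + b \<le> 1"
  proof -
    have "0 \<le> p1 * p2 + (1 - p1) * (1 - p2)" using p by (intro add_nonneg_nonneg mult_nonneg_nonneg) auto
    then show ?thesis by (simp add: a_def b_def algebra_simps)
  qed
  have pa: "prob (avoid M X 0 n 0) = hh a b n 0" for n using prob_avoid by (simp add: a_def b_def)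
  have dec: "decseq (\<lambda>n. avoid M X 0 n 0)" by (intro decseq_SucI) (auto simp: avoid_def)
  have "(\<lambda>n. prob (avoid M X 0 n 0)) \<longlonglongrightarrow> prob (\<Inter>n. avoid M X 0 n 0)"
    by (rule finite_Lim_measure_decseq) (use avoid_ev dec in auto)
  moreover have "(\<lambda>n. prob (avoid M X 0 n 0)) \<longlonglongrightarrow> \<bar>a - b\<bar>" using hh_lim0[OF a b ab] pa by simp
  ultimately have "prob (\<Inter>n. avoid M X 0 n 0) = \<bar>a - b\<bar>" using LIMSEQ_unique by blast
  then show "prob {\<omega> \<in> space M. first_meet X \<omega> = \<infinity>} = \<bar>p1 - p2\<bar>"
    unfolding fm_inf by (simp add: a_def b_def algebra_simps)
  show "(\<integral>\<^sup>+ \<omega>. ennreal_of_enat (first_meet X \<omega>) \<partial>M) = \<infinity>"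
  proof (rule ccontr)
    assume ne: "(\<integral>\<^sup>+ \<omega>. ennreal_of_enat (first_meet X \<omega>) \<partial>M) \<noteq> \<infinity>"
    have hnn: "0 \<le> hh a b n 0" for n using hh_bounds[of a b n 0] a b ab by simp
    have bound: "ennreal (\<Sum>n<N. hh a b n 0) \<le> (\<integral>\<^sup>+ \<omega>. ennreal_of_enat (first_meet X \<omega>) \<partial>M)" for N
    proof -
      have "ennreal (\<Sum>n<N. hh a b n 0) = (\<Sum>n<N. ennreal (hh a b n 0))"
        using hnn by (intro sum_ennreal[symmetric]) auto
      also have "\<dots> = (\<Sum>n<N. emeasure M (avoid M X 0 n 0))"
        using pa by (simp add: emeasure_eq_measure)
      also have "\<dots> = (\<integral>\<^sup>+ \<omega>. (\<Sum>n<N. indicator (avoid M X 0 n 0) \<omega>) \<partial>M)"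
        using avoid_ev by (subst nn_integral_sum) auto
      also have "\<dots> \<le> (\<integral>\<^sup>+ \<omega>. ennreal_of_enat (first_meet X \<omega>) \<partial>M)"
      proof (rule nn_integral_mono)
        fix \<omega> assume "\<omega> \<in> space M"
        have "(\<Sum>n<N. indicator (avoid M X 0 n 0) \<omega>) \<le> (\<Sum>n<N. (if enat n < first_meet X \<omega> then 1 else 0 :: ennreal))"
          by (intro sum_mono) (auto simp: indicator_def dest: fm_gt)
        also have "\<dots> \<le> ennreal_of_enat (first_meet X \<omega>)" by (rule sum_ind_le)
        finally show "(\<Sum>n<N. indicator (avoid M X 0 n 0) \<omega>) \<le> ennreal_of_enat (first_meet X \<omega>)" .
      qed
      finally show ?thesis .
    qed
    obtain t where t: "0 \<le> t" "(\<integral>\<^sup>+ \<omega>. ennreal_of_enat (first_meet X \<omega>) \<partial>M) = ennreal t"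
      using ne by (cases "(\<integral>\<^sup>+ \<omega>. ennreal_of_enat (first_meet X \<omega>) \<partial>M)") auto
    have "(\<Sum>n<N. hh a b n 0) \<le> t" for N using bound[of N] t by simp
    then have "summable (\<lambda>n. hh a b n 0)" using hnn by (intro summableI_nonneg_bounded) auto
    then show False using hh_not_summable[OF p] by (simp add: a_def b_def)
  qed
qed

end



theorem theorem3:
  fixes M :: "'a measure" and X :: "nat \<Rightarrow> nat \<Rightarrow> 'a \<Rightarrow> real" and p1 p2 :: real
  assumes "prob_space M"
    and "0 < p1" "p1 < 1" "0 < p2" "p2 < 1"
    and indep: "prob_space.indep_vars M (\<lambda>_. borel) (\<lambda>(j, k). X j k) ({1, 2} \<times> {1..})"
    and X1_one: "\<And>k. k \<ge> 1 \<Longrightarrow> measure M {\<omega> \<in> space M. X 1 k \<omega> = 1} = p1"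
    and X1_zero: "\<And>k. k \<ge> 1 \<Longrightarrow> measure M {\<omega> \<in> space M. X 1 k \<omega> = 0} = 1 - p1"
    and X2_one: "\<And>k. k \<ge> 1 \<Longrightarrow> measure M {\<omega> \<in> space M. X 2 k \<omega> = 1} = p2"
    and X2_zero: "\<And>k. k \<ge> 1 \<Longrightarrow> measure M {\<omega> \<in> space M. X 2 k \<omega> = 0} = 1 - p2"
  shows "measure M {\<omega> \<in> space M. first_meet X \<omega> = \<infinity>} = \<bar>p1 - p2\<bar>
         \<and> (\<integral>\<^sup>+ \<omega>. ennreal_of_enat (first_meet X \<omega>) \<partial>M) = \<infinity>"
proof -
  interpret P: prob_space M by fact
  define X' where "X' j k \<omega> = (if X j k \<omega> = 1 then 1 else (0::real))" for j k \<omega>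
  have measX: "X j k \<in> borel_measurable M" if jk: "j \<in> {1,2}" "k \<ge> 1" for j k
  proof -
    have "\<forall>i\<in>{1,2}\<times>{1..}. (\<lambda>(j, k). X j k) i \<in> borel_measurable M"
      using indep unfolding P.indep_vars_def by blast
    then have "(\<lambda>(j, k). X j k) (j, k) \<in> borel_measurable M" using jk by blast
    then show ?thesis by simp
  qed
  have ind': "P.indep_vars (\<lambda>_. borel) (\<lambda>(j, k). X' j k) ({1, 2} \<times> {1..})"
  proof -
    have mf: "(\<lambda>v::real. if v = 1 then 1 else (0::real)) \<in> borel_measurable borel" by measurable
    have "P.indep_vars (\<lambda>_. borel) (\<lambda>i x. (\<lambda>v::real. if v = 1 then 1 else (0::real)) ((\<lambda>(j, k). X j k) i x)) ({1, 2} \<times> {1..})"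
      by (rule P.indep_vars_compose2[OF indep]) (rule mf)
    moreover have "(\<lambda>i x. (\<lambda>v::real. if v = 1 then 1 else (0::real)) ((\<lambda>(j, k). X j k) i x)) = (\<lambda>(j, k). X' j k)"
      by (auto simp: fun_eq_iff X'_def)
    ultimately show ?thesis by simp
  qed
  have bw: "bwalk M X' p1 p2"
  proof (intro bwalk.intro bwalk_axioms.intro)
    show "prob_space M" by fact
    show "P.indep_vars (\<lambda>_. borel) (\<lambda>(j, k). X' j k) ({1, 2} \<times> {1..})" by (rule ind')
    show "X' j k \<omega> = 0 \<or> X' j k \<omega> = 1" for j k \<omega> by (simp add: X'_def)
    show "P.prob {\<omega> \<in> space M. X' 1 k \<omega> = 1} = p1" if "k \<ge> 1" for k
    proof -
      have "{\<omega> \<in> space M. X' 1 k \<omega> = 1} = {\<omega> \<in> space M. X 1 k \<omega> = 1}" by (auto simp: X'_def)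
      then show ?thesis using X1_one[OF that] by simp
    qed
    show "P.prob {\<omega> \<in> space M. X' 2 k \<omega> = 1} = p2" if "k \<ge> 1" for k
    proof -
      have "{\<omega> \<in> space M. X' 2 k \<omega> = 1} = {\<omega> \<in> space M. X 2 k \<omega> = 1}" by (auto simp: X'_def)
      then show ?thesis using X2_one[OF that] by simp
    qed
  qed
  have ae1: "AE \<omega> in M. X j k \<omega> = X' j k \<omega>" if jk: "j \<in> {1,2}" "k \<ge> 1" for j k
  proof -
    have ev: "{\<omega> \<in> space M. X j k \<omega> = e} \<in> sets M" for e
    proof -
      have "X j k -` {e} \<inter> space M \<in> sets M" using measurable_sets[OF measX[OF jk], of "{e}"] by simp
      moreover have "X j k -` {e} \<inter> space M = {\<omega> \<in> space M. X j k \<omega> = e}" by auto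
      ultimately show ?thesis by simp
    qed
    have p01: "P.prob {\<omega> \<in> space M. X j k \<omega> = 0} + P.prob {\<omega> \<in> space M. X j k \<omega> = 1} = 1"
      using jk X1_one X1_zero X2_one X2_zero by auto
    have "P.prob ({\<omega> \<in> space M. X j k \<omega> = 0} \<union> {\<omega> \<in> space M. X j k \<omega> = 1}) = 1"
      using p01 by (subst P.finite_measure_Union) (use ev in auto)
    then have "AE \<omega> in M. \<omega> \<in> {\<omega> \<in> space M. X j k \<omega> = 0} \<union> {\<omega> \<in> space M. X j k \<omega> = 1}"
      by (rule P.AE_prob_1)
    then show ?thesis by eventually_elim (auto simp: X'_def)
  qed
  have ae: "AE \<omega> in M. \<forall>j k. j \<in> {1,2} \<and> k \<ge> 1 \<longrightarrow> X j k \<omega> = X' j k \<omega>"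
  proof -
    have "\<forall>j k. AE \<omega> in M. j \<in> {1,2} \<and> k \<ge> 1 \<longrightarrow> X j k \<omega> = X' j k \<omega>"
    proof (intro allI)
      fix j k :: nat
      show "AE \<omega> in M. j \<in> {1,2} \<and> k \<ge> 1 \<longrightarrow> X j k \<omega> = X' j k \<omega>"
        by (cases "j \<in> {1,2} \<and> k \<ge> 1") (use ae1 in auto)
    qed
    then show ?thesis by (simp add: AE_all_countable)
  qed
  have fmeq: "AE \<omega> in M. first_meet X \<omega> = first_meet X' \<omega>"
    using ae
  proof eventually_elim
    case (elim \<omega>)
    have ps: "partial_sum X j n \<omega> = partial_sum X' j n \<omega>" if "j \<in> {1,2}" for j n
      unfolding partial_sum_def using elim that by (intro sum.cong) auto
    show ?case unfolding first_meet_def using ps[of 1] ps[of 2] by simp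
  qed
  have s1: "{\<omega> \<in> space M. first_meet X \<omega> = \<infinity>} \<in> sets M"
    unfolding fm_inf using avoid_sets[of X M, OF measX] by (intro sets.countable_INT) auto
  have s2: "{\<omega> \<in> space M. first_meet X' \<omega> = \<infinity>} \<in> sets M"
    unfolding fm_inf using bwalk.avoid_ev[OF bw] by (intro sets.countable_INT) auto
  have "measure M {\<omega> \<in> space M. first_meet X \<omega> = \<infinity>} = measure M {\<omega> \<in> space M. first_meet X' \<omega> = \<infinity>}"
    by (rule measure_eq_AE) (use fmeq s1 s2 in auto)
  moreover have "(\<integral>\<^sup>+ \<omega>. ennreal_of_enat (first_meet X \<omega>) \<partial>M) = (\<integral>\<^sup>+ \<omega>. ennreal_of_enat (first_meet X' \<omega>) \<partial>M)"
    by (rule nn_integral_cong_AE) (use fmeq in auto)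
  ultimately show ?thesis using bwalk.main[OF bw \<open>0 < p1\<close> \<open>p1 < 1\<close> \<open>0 < p2\<close> \<open>p2 < 1\<close>] by simp
qed

end
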